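(* Let $\Omega\subset\mathbb{R}^2\cong\mathbb{C}$ be a domain and let $\Phi=u+iv$ be an analytic function of $z=x+iy$ in $\Omega$ (with $u,v$ real valued) such that $\Phi_z=\partial_z\Phi$ is bounded and has no zeros in $\Omega$. Let $U$ and $V$ be arbitrary differentiable nonvanishing real valued functions of one real variable, and put $F=U(u)V(v)$, $G=\dfrac{i}{U(u)V(v)}$. For $m=0,\pm1,\pm2,\ldots$ define $$F_m=(\Phi_z)^mF,\quad G_m=(\Phi_z)^mG\qquad\text{for even } m,$$ $$F_m=\frac{(\Phi_z)^m}{U^2(u)}F,\quad G_m=(\Phi_z)^mU^2(u)\,G\qquad\text{for odd } m.$$ Then each $(F_m,G_m)$ is a generating pair in $\Omega$, and for every integer $m$ the pair $(F_{m+1},G_{m+1})$ is a successor of $(F_m,G_m)$. That is, $\{(F_m,G_m)\}_{m\in\mathbb{Z}}$ is a generating sequence in $\Omega$ in which $(F,G)=(F_0,G_0)$ is embedded.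
   Context: Notation: $\partial_{\bar z}=\frac12(\partial_x+i\partial_y)$ and $\partial_z=\frac12(\partial_x-i\partial_y)$; a subscript $\bar z$ or $z$ on a function means application of the corresponding operator. A pair of complex functions $(F,G)$ having partial derivatives in $\Omega$ is a generating pair if $\operatorname{Im}(\overline{F}G)>0$ in $\Omega$. Its characteristic coefficients are $$a_{(F,G)}=-\frac{\overline{F}G_{\bar z}-F_{\bar z}\overline{G}}{F\overline{G}-\overline{F}G},\quad b_{(F,G)}=\frac{FG_{\bar z}-F_{\bar z}G}{F\overline{G}-\overline{F}G},$$ $$A_{(F,G)}=-\frac{\overline{F}G_{z}-F_{z}\overline{G}}{F\overline{G}-\overline{F}G},\quad B_{(F,G)}=\frac{FG_{z}-F_{z}G}{F\overline{G}-\overline{F}G}.$$ A generating pair $(F_1,G_1)$ is called a successor of a generating pair $(F,G)$ if $a_{(F_1,G_1)}=a_{(F,G)}$ and $b_{(F_1,G_1)}=-B_{(F,G)}$. A sequence $\{(F_m,G_m)\}$, $m=0,\pm1,\pm2,\ldots$, of generating pairs is a generating sequence if $(F_{m+1},G_{m+1})$ is a successor of $(F_m,G_m)$ for every $m$. The pair $(F,G)$ is said to be embedded in it if $(F_0,G_0)=(F,G)$. *)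

theory Defs
  imports "HOL-Analysis.Analysis"
begin

definition px :: "(complex \<Rightarrow> complex) \<Rightarrow> complex \<Rightarrow> complex" where
  "px f z = vector_derivative (\<lambda>t::real. f (z + of_real t)) (at 0)"

definition py :: "(complex \<Rightarrow> complex) \<Rightarrow> complex \<Rightarrow> complex" where
  "py f z = vector_derivative (\<lambda>t::real. f (z + \<i> * of_real t)) (at 0)"

definition has_partials_on :: "complex set \<Rightarrow> (complex \<Rightarrow> complex) \<Rightarrow> bool" where
  "has_partials_on \<Omega> f \<longleftrightarrow> (\<forall>z\<in>\<Omega>.
      (\<lambda>t::real. f (z + of_real t)) differentiable (at 0) \<and>
      (\<lambda>t::real. f (z + \<i> * of_real t)) differentiable (at 0))"

definition dzbar :: "(complex \<Rightarrow> complex) \<Rightarrow> complex \<Rightarrow> complex" where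
  "dzbar f z = (px f z + \<i> * py f z) / 2"

definition dz :: "(complex \<Rightarrow> complex) \<Rightarrow> complex \<Rightarrow> complex" where
  "dz f z = (px f z - \<i> * py f z) / 2"

definition generating_pair :: "complex set \<Rightarrow> (complex \<Rightarrow> complex) \<Rightarrow> (complex \<Rightarrow> complex) \<Rightarrow> bool" where
  "generating_pair \<Omega> F G \<longleftrightarrow> has_partials_on \<Omega> F \<and> has_partials_on \<Omega> G \<and>
     (\<forall>z\<in>\<Omega>. Im (cnj (F z) * G z) > 0)"

definition char_a :: "(complex \<Rightarrow> complex) \<Rightarrow> (complex \<Rightarrow> complex) \<Rightarrow> complex \<Rightarrow> complex" where
  "char_a F G z = - (cnj (F z) * dzbar G z - dzbar F z * cnj (G z)) / (F z * cnj (G z) - cnj (F z) * G z)"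

definition char_b :: "(complex \<Rightarrow> complex) \<Rightarrow> (complex \<Rightarrow> complex) \<Rightarrow> complex \<Rightarrow> complex" where
  "char_b F G z = (F z * dzbar G z - dzbar F z * G z) / (F z * cnj (G z) - cnj (F z) * G z)"

definition char_A :: "(complex \<Rightarrow> complex) \<Rightarrow> (complex \<Rightarrow> complex) \<Rightarrow> complex \<Rightarrow> complex" where
  "char_A F G z = - (cnj (F z) * dz G z - dz F z * cnj (G z)) / (F z * cnj (G z) - cnj (F z) * G z)"

definition char_B :: "(complex \<Rightarrow> complex) \<Rightarrow> (complex \<Rightarrow> complex) \<Rightarrow> complex \<Rightarrow> complex" where
  "char_B F G z = (F z * dz G z - dz F z * G z) / (F z * cnj (G z) - cnj (F z) * G z)"

definition successor :: "complex set \<Rightarrow> (complex \<Rightarrow> complex) \<Rightarrow> (complex \<Rightarrow> complex)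
    \<Rightarrow> (complex \<Rightarrow> complex) \<Rightarrow> (complex \<Rightarrow> complex) \<Rightarrow> bool" where
  "successor \<Omega> F1 G1 F G \<longleftrightarrow> generating_pair \<Omega> F1 G1 \<and> generating_pair \<Omega> F G \<and>
     (\<forall>z\<in>\<Omega>. char_a F1 G1 z = char_a F G z \<and> char_b F1 G1 z = - char_B F G z)"

definition generating_sequence :: "complex set \<Rightarrow> (int \<Rightarrow> (complex \<Rightarrow> complex) \<times> (complex \<Rightarrow> complex)) \<Rightarrow> bool" where
  "generating_sequence \<Omega> S \<longleftrightarrow> (\<forall>m. generating_pair \<Omega> (fst (S m)) (snd (S m)) \<and>
      successor \<Omega> (fst (S (m+1))) (snd (S (m+1))) (fst (S m)) (snd (S m)))"

definition embedded_in :: "complex set \<Rightarrow> (complex \<Rightarrow> complex) \<Rightarrow> (complex \<Rightarrow> complex)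
    \<Rightarrow> (int \<Rightarrow> (complex \<Rightarrow> complex) \<times> (complex \<Rightarrow> complex)) \<Rightarrow> bool" where
  "embedded_in \<Omega> F G S \<longleftrightarrow> generating_sequence \<Omega> S \<and> S 0 = (F, G)"

end

theory Submission imports Defs "HOL-Complex_Analysis.Complex_Analysis" begin

lemma line_vd:
  assumes "(f has_field_derivative p) (at z)"
  shows "((\<lambda>t. f (z + of_real t * d)) has_vector_derivative (d * p)) (at 0)"
proof -
  have g: "((\<lambda>t::real. z + of_real t * d) has_vector_derivative d) (at 0)"
    by (auto intro!: derivative_eq_intros)
  have "(f has_field_derivative p) (at ((\<lambda>t::real. z + of_real t * d) 0))" using assms by simp
  from field_vector_diff_chain_at[OF g this] show ?thesis by (simp add: o_def)
qed

lemma line_Re: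
  assumes "(f has_field_derivative p) (at z)"
  shows "((\<lambda>t. Re (f (z + of_real t * d))) has_real_derivative Re (d * p)) (at 0)"
  using bounded_linear.has_vector_derivative[OF bounded_linear_Re line_vd[OF assms, of d]]
  by (simp add: has_real_derivative_iff_has_vector_derivative)

lemma line_Im:
  assumes "(f has_field_derivative p) (at z)"
  shows "((\<lambda>t. Im (f (z + of_real t * d))) has_real_derivative Im (d * p)) (at 0)"
  using bounded_linear.has_vector_derivative[OF bounded_linear_Im line_vd[OF assms, of d]]
  by (simp add: has_real_derivative_iff_has_vector_derivative)

lemma px_eq: "((\<lambda>t. f (z + of_real t * 1)) has_vector_derivative X) (at 0) \<Longrightarrow> px f z = X"
  unfolding px_def by (simp add: vector_derivative_at)

lemma py_eq: "((\<lambda>t. f (z + of_real t * \<i>)) has_vector_derivative X) (at 0) \<Longrightarrow> py f z = X"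
  unfolding py_def by (simp add: vector_derivative_at mult.commute)


lemma pair_lemma:
  fixes P :: "complex \<Rightarrow> complex" and R :: "complex \<Rightarrow> real"
  assumes P: "(P has_field_derivative q) (at z)" and Pnz: "P z \<noteq> 0"
    and Ra: "((\<lambda>t. R (z + of_real t * 1)) has_real_derivative a) (at 0)"
    and Rb: "((\<lambda>t. R (z + of_real t * \<i>)) has_real_derivative b) (at 0)"
    and Rnz: "R z \<noteq> 0"
    and F: "F = (\<lambda>w. P w * of_real (R w))"
    and G: "G = (\<lambda>w. \<i> * P w * of_real (inverse (R w)))"
  shows "((\<lambda>t. F (z + of_real t)) differentiable (at 0)) \<and>
         ((\<lambda>t. F (z + \<i> * of_real t)) differentiable (at 0)) \<and>
         ((\<lambda>t. G (z + of_real t)) differentiable (at 0)) \<and>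
         ((\<lambda>t. G (z + \<i> * of_real t)) differentiable (at 0)) \<and>
         Im (cnj (F z) * G z) > 0 \<and>
         char_a F G z = 0 \<and>
         char_b F G z = P z / cnj (P z) * ((of_real a + \<i> * of_real b) / (2 * of_real (R z))) \<and>
         char_B F G z = P z / cnj (P z) * ((of_real a - \<i> * of_real b) / (2 * of_real (R z)))"
proof -
  have lineP: "((\<lambda>t. P (z + of_real t * d)) has_vector_derivative (d * q)) (at 0)" for d
    by (rule line_vd[OF P])
  have Fd: "((\<lambda>t. F (z + of_real t * d)) has_vector_derivative
      (P z * of_real a' + d * q * of_real (R z))) (at 0)"
    if "((\<lambda>t. R (z + of_real t * d)) has_real_derivative a') (at 0)" for d a'
    unfolding F using that lineP[of d]
    by (auto intro!: derivative_eq_intros)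
  have Gd: "((\<lambda>t. G (z + of_real t * d)) has_vector_derivative
      (\<i> * (P z * of_real (- (a' / (R z)^2)) + d * q * of_real (inverse (R z))))) (at 0)"
    if "((\<lambda>t. R (z + of_real t * d)) has_real_derivative a') (at 0)" for d a'
  proof -
    have inv: "((\<lambda>t. inverse (R (z + of_real t * d))) has_real_derivative (- (a' / (R z)^2))) (at 0)"
      using that Rnz by (auto intro!: derivative_eq_intros simp: power2_eq_square field_simps)
    have "((\<lambda>t. P (z + of_real t * d) * of_real (inverse (R (z + of_real t * d)))) has_vector_derivative
      (P z * of_real (- (a' / (R z)^2)) + d * q * of_real (inverse (R z)))) (at 0)"
      using has_vector_derivative_mult[OF lineP[of d] has_vector_derivative_of_real[OF inv]] by simp
    from has_vector_derivative_mult_right[OF this, of \<i>] show ?thesis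
      unfolding G by (simp add: mult.assoc)
  qed
  note F1 = Fd[OF Ra] and F2 = Fd[OF Rb] and G1 = Gd[OF Ra] and G2 = Gd[OF Rb]
  have diff: "((\<lambda>t. F (z + of_real t)) differentiable (at 0)) \<and>
         ((\<lambda>t. F (z + \<i> * of_real t)) differentiable (at 0)) \<and>
         ((\<lambda>t. G (z + of_real t)) differentiable (at 0)) \<and>
         ((\<lambda>t. G (z + \<i> * of_real t)) differentiable (at 0))"
    using F1 F2 G1 G2 unfolding differentiable_def has_vector_derivative_def by (auto simp: mult.commute)
  have pxF: "px F z = P z * of_real a + q * of_real (R z)" using px_eq[OF F1] by simp
  have pyF: "py F z = P z * of_real b + \<i> * q * of_real (R z)" using py_eq[OF F2] by simp
  have pxG: "px G z = \<i> * (P z * of_real (- (a / (R z)^2)) + q * of_real (inverse (R z)))"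
    using px_eq[OF G1] by simp
  have pyG: "py G z = \<i> * (P z * of_real (- (b / (R z)^2)) + \<i> * q * of_real (inverse (R z)))"
    using py_eq[OF G2] by simp
  have Fz: "F z = P z * of_real (R z)" and Gz: "G z = \<i> * P z * of_real (inverse (R z))"
    using F G by simp_all
  have cP: "cnj (P z) \<noteq> 0" using Pnz by simp
  have rr: "complex_of_real (R z) \<noteq> 0" using Rnz by simp
  have im: "Im (cnj (F z) * G z) > 0"
    unfolding Fz Gz using Pnz Rnz
    by (auto simp add: field_simps power2_eq_square[symmetric] sum_power2_gt_zero_iff complex_eq_iff)
  have ca: "char_a F G z = 0"
    unfolding char_a_def dzbar_def pxF pyF pxG pyG Fz Gz using Pnz Rnz cP rr
    by (simp add: field_simps power2_eq_square)
  have cb: "char_b F G z = P z / cnj (P z) * ((of_real a + \<i> * of_real b) / (2 * of_real (R z)))"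
    unfolding char_b_def dzbar_def pxF pyF pxG pyG Fz Gz using Pnz Rnz cP rr
    by (simp add: field_simps power2_eq_square)
  have cB: "char_B F G z = P z / cnj (P z) * ((of_real a - \<i> * of_real b) / (2 * of_real (R z)))"
    unfolding char_B_def dz_def pxF pyF pxG pyG Fz Gz using Pnz Rnz cP rr
    by (simp add: field_simps power2_eq_square)
  show ?thesis using diff im ca cb cB by blast
qed


lemma alg_core:
  fixes p :: complex and U0 V0 U1 V1 a b a' b' R R' :: real
  assumes p: "p \<noteq> 0" and U0: "U0 \<noteq> 0" and V0: "V0 \<noteq> 0"
    and R: "R = U0 * V0" and R': "R' = V0 / U0"
    and a: "a = U1 * Re p * V0 + U0 * (V1 * Im p)"
    and b: "b = U1 * Re (\<i> * p) * V0 + U0 * (V1 * Im (\<i> * p))"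
    and a': "a' = (V1 * Im p * U0 - V0 * (U1 * Re p)) / (U0 * U0)"
    and b': "b' = (V1 * Im (\<i> * p) * U0 - V0 * (U1 * Re (\<i> * p))) / (U0 * U0)"
  shows "p / cnj p * ((of_real a' + \<i> * of_real b') / (2 * of_real R')) = - ((of_real a - \<i> * of_real b) / (2 * of_real R))"
    and "p / cnj p * ((of_real a + \<i> * of_real b) / (2 * of_real R)) = - ((of_real a' - \<i> * of_real b') / (2 * of_real R'))"
proof -
  have cp: "cnj p \<noteq> 0" using p by simp
  have e1: "of_real a' + \<i> * of_real b' = cnj p * (\<i> * of_real V1 * of_real U0 - of_real V0 * of_real U1) / (of_real U0 * of_real U0)"
    unfolding a' b' using U0 by (simp add: complex_eq_iff field_simps)
  have e2: "of_real a - \<i> * of_real b = p * (of_real U1 * of_real V0 - \<i> * of_real U0 * of_real V1)"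
    unfolding a b by (simp add: complex_eq_iff field_simps)
  have e3: "of_real a + \<i> * of_real b = cnj p * (of_real U1 * of_real V0 + \<i> * of_real U0 * of_real V1)"
    unfolding a b by (simp add: complex_eq_iff field_simps)
  have e4: "of_real a' - \<i> * of_real b' = p * (- \<i> * of_real V1 * of_real U0 - of_real V0 * of_real U1) / (of_real U0 * of_real U0)"
    unfolding a' b' using U0 by (simp add: complex_eq_iff field_simps)
  show "p / cnj p * ((of_real a' + \<i> * of_real b') / (2 * of_real R')) = - ((of_real a - \<i> * of_real b) / (2 * of_real R))"
    unfolding e1 e2 R R' using U0 V0 cp by (simp add: field_simps)
  show "p / cnj p * ((of_real a + \<i> * of_real b) / (2 * of_real R)) = - ((of_real a' - \<i> * of_real b') / (2 * of_real R'))"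
    unfolding e3 e4 R R' using U0 V0 cp by (simp add: field_simps)
qed


lemma W_line:
  assumes P: "(\<Phi> has_field_derivative p) (at z)"
    and Ud: "\<forall>t. U differentiable (at t)" and Vd: "\<forall>t. V differentiable (at t)"
  shows "((\<lambda>t. U (Re (\<Phi> (z + of_real t * d))) * V (Im (\<Phi> (z + of_real t * d)))) has_real_derivative
     (deriv U (Re (\<Phi> z)) * Re (d * p) * V (Im (\<Phi> z)) + U (Re (\<Phi> z)) * (deriv V (Im (\<Phi> z)) * Im (d * p)))) (at 0)"
proof -
  have U': "\<And>x. (U has_real_derivative deriv U x) (at x)" using Ud DERIV_deriv_iff_real_differentiable by blast
  have V': "\<And>x. (V has_real_derivative deriv V x) (at x)" using Vd DERIV_deriv_iff_real_differentiable by blast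
  have A: "((\<lambda>t. U (Re (\<Phi> (z + of_real t * d)))) has_real_derivative deriv U (Re (\<Phi> z)) * Re (d * p)) (at 0)"
    using DERIV_chain2[OF U' line_Re[OF P, of d]] by simp
  have B: "((\<lambda>t. V (Im (\<Phi> (z + of_real t * d)))) has_real_derivative deriv V (Im (\<Phi> z)) * Im (d * p)) (at 0)"
    using DERIV_chain2[OF V' line_Im[OF P, of d]] by simp
  show ?thesis using DERIV_mult[OF A B] by (simp add: mult_ac)
qed

lemma Q_line:
  assumes P: "(\<Phi> has_field_derivative p) (at z)"
    and Ud: "\<forall>t. U differentiable (at t)" and Vd: "\<forall>t. V differentiable (at t)"
    and Un: "\<forall>t. U t \<noteq> 0"
  shows "((\<lambda>t. V (Im (\<Phi> (z + of_real t * d))) / U (Re (\<Phi> (z + of_real t * d)))) has_real_derivative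
     ((deriv V (Im (\<Phi> z)) * Im (d * p) * U (Re (\<Phi> z)) - V (Im (\<Phi> z)) * (deriv U (Re (\<Phi> z)) * Re (d * p)))
       / (U (Re (\<Phi> z)) * U (Re (\<Phi> z))))) (at 0)"
proof -
  have U': "\<And>x. (U has_real_derivative deriv U x) (at x)" using Ud DERIV_deriv_iff_real_differentiable by blast
  have V': "\<And>x. (V has_real_derivative deriv V x) (at x)" using Vd DERIV_deriv_iff_real_differentiable by blast
  have A: "((\<lambda>t. U (Re (\<Phi> (z + of_real t * d)))) has_real_derivative deriv U (Re (\<Phi> z)) * Re (d * p)) (at 0)"
    using DERIV_chain2[OF U' line_Re[OF P, of d]] by simp
  have B: "((\<lambda>t. V (Im (\<Phi> (z + of_real t * d)))) has_real_derivative deriv V (Im (\<Phi> z)) * Im (d * p)) (at 0)"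
    using DERIV_chain2[OF V' line_Im[OF P, of d]] by simp
  have "U (Re (\<Phi> (z + of_real 0 * d))) \<noteq> 0" using Un by blast
  from DERIV_divide[OF B A this] show ?thesis by (simp add: power2_eq_square)
qed


theorem theorem20:
  fixes \<Omega> :: "complex set" and \<Phi> :: "complex \<Rightarrow> complex" and U V :: "real \<Rightarrow> real"
    and F G :: "complex \<Rightarrow> complex"
    and S :: "int \<Rightarrow> (complex \<Rightarrow> complex) \<times> (complex \<Rightarrow> complex)"
  assumes dom: "open \<Omega>" "connected \<Omega>" "\<Omega> \<noteq> {}"
    and hol: "\<Phi> holomorphic_on \<Omega>"
    and bdd: "\<exists>M. \<forall>z\<in>\<Omega>. norm (deriv \<Phi> z) \<le> M"
    and nz: "\<forall>z\<in>\<Omega>. deriv \<Phi> z \<noteq> 0"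
    and Ud: "\<forall>t. U differentiable (at t)" and Un: "\<forall>t. U t \<noteq> 0"
    and Vd: "\<forall>t. V differentiable (at t)" and Vn: "\<forall>t. V t \<noteq> 0"
    and F_def: "F = (\<lambda>z. complex_of_real (U (Re (\<Phi> z)) * V (Im (\<Phi> z))))"
    and G_def: "G = (\<lambda>z. \<i> / complex_of_real (U (Re (\<Phi> z)) * V (Im (\<Phi> z))))"
    and S_def: "S = (\<lambda>m. if even m
        then ((\<lambda>z. deriv \<Phi> z powi m * F z), (\<lambda>z. deriv \<Phi> z powi m * G z))
        else ((\<lambda>z. deriv \<Phi> z powi m / complex_of_real ((U (Re (\<Phi> z)))\<^sup>2) * F z),
              (\<lambda>z. deriv \<Phi> z powi m * complex_of_real ((U (Re (\<Phi> z)))\<^sup>2) * G z)))"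
  shows "(\<forall>m. generating_pair \<Omega> (fst (S m)) (snd (S m)) \<and>
             successor \<Omega> (fst (S (m+1))) (snd (S (m+1))) (fst (S m)) (snd (S m)))
         \<and> generating_sequence \<Omega> S \<and> embedded_in \<Omega> F G S"
proof -
  define W where "W = (\<lambda>w. U (Re (\<Phi> w)) * V (Im (\<Phi> w)))"
  define Q where "Q = (\<lambda>w. V (Im (\<Phi> w)) / U (Re (\<Phi> w)))"
  define Rm where "Rm = (\<lambda>m::int. if even m then W else Q)"
  define Pm where "Pm = (\<lambda>(m::int) w. deriv \<Phi> w powi m)"
  have Sm: "S m = ((\<lambda>w. Pm m w * of_real (Rm m w)), (\<lambda>w. \<i> * Pm m w * of_real (inverse (Rm m w))))" for m
  proof (cases "even m")
    case True
    then show ?thesis unfolding S_def Rm_def Pm_def W_def F_def G_def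
      by (auto simp: divide_inverse mult_ac)
  next
    case False
    have 1: "deriv \<Phi> w powi m / complex_of_real ((U (Re (\<Phi> w)))\<^sup>2) *
        complex_of_real (U (Re (\<Phi> w)) * V (Im (\<Phi> w))) =
        deriv \<Phi> w powi m * complex_of_real (V (Im (\<Phi> w)) / U (Re (\<Phi> w)))" for w
      using Un[rule_format, of "Re (\<Phi> w)"] by (simp add: field_simps power2_eq_square)
    have 2: "deriv \<Phi> w powi m * complex_of_real ((U (Re (\<Phi> w)))\<^sup>2) *
        (\<i> / complex_of_real (U (Re (\<Phi> w)) * V (Im (\<Phi> w)))) =
        \<i> * deriv \<Phi> w powi m * complex_of_real (inverse (V (Im (\<Phi> w)) / U (Re (\<Phi> w))))" for w
      using Un[rule_format, of "Re (\<Phi> w)"] Vn[rule_format, of "Im (\<Phi> w)"]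
      by (simp add: field_simps power2_eq_square)
    have eq: "S m = ((\<lambda>w. deriv \<Phi> w powi m / complex_of_real ((U (Re (\<Phi> w)))\<^sup>2) *
        complex_of_real (U (Re (\<Phi> w)) * V (Im (\<Phi> w)))),
        (\<lambda>w. deriv \<Phi> w powi m * complex_of_real ((U (Re (\<Phi> w)))\<^sup>2) *
        (\<i> / complex_of_real (U (Re (\<Phi> w)) * V (Im (\<Phi> w))))))"
      using False unfolding S_def F_def G_def by simp
    show ?thesis unfolding eq Rm_def Pm_def Q_def if_not_P[OF False] 1 2 by (rule refl)
  qed
  have Phider: "z \<in> \<Omega> \<Longrightarrow> (\<Phi> has_field_derivative deriv \<Phi> z) (at z)" for z
    using holomorphic_derivI[OF hol dom(1)] by blast
  have hol': "deriv \<Phi> holomorphic_on \<Omega>" by (rule holomorphic_deriv[OF hol dom(1)])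
  have Pder: "z \<in> \<Omega> \<Longrightarrow> (Pm m has_field_derivative deriv (Pm m) z) (at z)" for z m
  proof -
    assume z: "z \<in> \<Omega>"
    have "Pm m holomorphic_on \<Omega>" unfolding Pm_def
      using holomorphic_on_power_int[OF _ hol', of m] nz by blast
    then show ?thesis using holomorphic_derivI[OF _ dom(1) z] by blast
  qed
  have Pnz: "z \<in> \<Omega> \<Longrightarrow> Pm m z \<noteq> 0" for z m using nz unfolding Pm_def by simp
  have Psuc: "z \<in> \<Omega> \<Longrightarrow> Pm (m+1) z = deriv \<Phi> z * Pm m z" for z m
    using nz unfolding Pm_def by (simp add: power_int_add mult.commute)
  define da where "da = (\<lambda>(m::int) z d. if even m then
      deriv U (Re (\<Phi> z)) * Re (d * deriv \<Phi> z) * V (Im (\<Phi> z)) + U (Re (\<Phi> z)) * (deriv V (Im (\<Phi> z)) * Im (d * deriv \<Phi> z))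
    else (deriv V (Im (\<Phi> z)) * Im (d * deriv \<Phi> z) * U (Re (\<Phi> z)) - V (Im (\<Phi> z)) * (deriv U (Re (\<Phi> z)) * Re (d * deriv \<Phi> z)))
       / (U (Re (\<Phi> z)) * U (Re (\<Phi> z))))"
  have Rder: "z \<in> \<Omega> \<Longrightarrow> ((\<lambda>t. Rm m (z + of_real t * d)) has_real_derivative da m z d) (at 0)" for z m d
    unfolding Rm_def da_def W_def Q_def
    using W_line[OF Phider Ud Vd] Q_line[OF Phider Ud Vd Un] by auto
  have Rnz: "Rm m z \<noteq> 0" for m z unfolding Rm_def W_def Q_def using Un Vn by auto
  have key: "((\<lambda>t. fst (S m) (z + of_real t)) differentiable (at 0)) \<and>
         ((\<lambda>t. fst (S m) (z + \<i> * of_real t)) differentiable (at 0)) \<and>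
         ((\<lambda>t. snd (S m) (z + of_real t)) differentiable (at 0)) \<and>
         ((\<lambda>t. snd (S m) (z + \<i> * of_real t)) differentiable (at 0)) \<and>
         Im (cnj (fst (S m) z) * snd (S m) z) > 0 \<and>
         char_a (fst (S m)) (snd (S m)) z = 0 \<and>
         char_b (fst (S m)) (snd (S m)) z = Pm m z / cnj (Pm m z) * ((of_real (da m z 1) + \<i> * of_real (da m z \<i>)) / (2 * of_real (Rm m z))) \<and>
         char_B (fst (S m)) (snd (S m)) z = Pm m z / cnj (Pm m z) * ((of_real (da m z 1) - \<i> * of_real (da m z \<i>)) / (2 * of_real (Rm m z)))"
    if z: "z \<in> \<Omega>" for z m
    by (rule pair_lemma[OF Pder[OF z] Pnz[OF z] Rder[OF z] Rder[OF z] Rnz]) (simp_all add: Sm)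
  have gp: "generating_pair \<Omega> (fst (S m)) (snd (S m))" for m
    unfolding generating_pair_def has_partials_on_def using key by blast
  have sc: "successor \<Omega> (fst (S (m+1))) (snd (S (m+1))) (fst (S m)) (snd (S m))" for m
    unfolding successor_def
  proof (intro conjI gp ballI)
    fix z assume z: "z \<in> \<Omega>"
    show "char_a (fst (S (m + 1))) (snd (S (m + 1))) z = char_a (fst (S m)) (snd (S m)) z"
      using key[OF z, of m] key[OF z, of "m+1"] by simp
    let ?p = "deriv \<Phi> z" and ?c = "Pm m z"
    have fac: "(?p * ?c) / cnj (?p * ?c) * X = ?c / cnj ?c * (?p / cnj ?p * X)" for X
      by (simp add: field_simps)
    have A: "U (Re (\<Phi> z)) \<noteq> 0" "V (Im (\<Phi> z)) \<noteq> 0" using Un Vn by auto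
    show "char_b (fst (S (m + 1))) (snd (S (m + 1))) z = - char_B (fst (S m)) (snd (S m)) z"
    proof (cases "even m")
      case True
      note al = alg_core(1)[OF nz[rule_format, OF z] A, of "W z" "Q z" "da m z 1" "deriv U (Re (\<Phi> z))" "deriv V (Im (\<Phi> z))" "da m z \<i>" "da (m+1) z 1" "da (m+1) z \<i>"]
      have al': "?p / cnj ?p * ((of_real (da (m+1) z 1) + \<i> * of_real (da (m+1) z \<i>)) / (2 * of_real (Rm (m+1) z)))
          = - ((of_real (da m z 1) - \<i> * of_real (da m z \<i>)) / (2 * of_real (Rm m z)))"
      proof -
        have r1: "Rm m z = W z" "Rm (m+1) z = Q z" using True by (simp_all add: Rm_def)
        show ?thesis unfolding r1 by (rule al) (use True in \<open>auto simp: W_def Q_def da_def\<close>)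
      qed
      show ?thesis using key[OF z, of m] key[OF z, of "m+1"] unfolding Psuc[OF z] fac al' by simp
    next
      case False
      note al = alg_core(2)[OF nz[rule_format, OF z] A, of "W z" "Q z" "da (m+1) z 1" "deriv U (Re (\<Phi> z))" "deriv V (Im (\<Phi> z))" "da (m+1) z \<i>" "da m z 1" "da m z \<i>"]
      have al': "?p / cnj ?p * ((of_real (da (m+1) z 1) + \<i> * of_real (da (m+1) z \<i>)) / (2 * of_real (Rm (m+1) z)))
          = - ((of_real (da m z 1) - \<i> * of_real (da m z \<i>)) / (2 * of_real (Rm m z)))"
      proof -
        have r1: "Rm m z = Q z" "Rm (m+1) z = W z" using False by (simp_all add: Rm_def)
        show ?thesis unfolding r1 by (rule al) (use False in \<open>auto simp: W_def Q_def da_def\<close>)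
      qed
      show ?thesis using key[OF z, of m] key[OF z, of "m+1"] unfolding Psuc[OF z] fac al' by simp
    qed
  qed
  have S0: "S 0 = (F, G)" unfolding S_def by simp
  show ?thesis using gp sc S0 unfolding generating_sequence_def embedded_in_def by blast
qed

end
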